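(* Let $\mathcal{LS}_{\mathfrak{B}_1}$ be the operad (variety) of left-symmetric algebras over a field of characteristic $0$ satisfying the identity $(ab)c-(ba)c-(ac)b+(ca)b+(bc)a-(cb)a=0$. Its Koszul dual operad $\mathcal{LS}_{\mathfrak{B}_1}^{(!)}$ is the operad of assosymmetric algebras satisfying the left-commutative identity $a(bc)=b(ac)$.
   Context: A left-symmetric algebra is an algebra whose associator $(a,b,c)=(ab)c-a(bc)$ satisfies $(a,b,c)=(b,a,c)$. An algebra is assosymmetric if its associator is invariant under all permutations of $a,b,c$. The Koszul dual of a binary quadratic operad is taken in the sense of Ginzburg–Kapranov; equivalently, $\mathcal{P}^{(!)}$ is the quadratic operad whose algebras $U$ are defined by exactly those degree-3 identities making $S\otimes U$, with product $(a\otimes u)(b\otimes v)=ab\otimes uv$, Lie-admissible for every $\mathcal{P}$-algebra $S$. *)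

theory Defs
  imports Complex_Main "HOL-Library.Function_Algebras"
begin

definition is_algebra :: "('k::field \<Rightarrow> 'a::ab_group_add \<Rightarrow> 'a) \<Rightarrow> ('a \<Rightarrow> 'a \<Rightarrow> 'a) \<Rightarrow> bool" where
  "is_algebra sc m \<longleftrightarrow> vector_space sc \<and>
     (\<forall>x y z. m (x + y) z = m x z + m y z) \<and>
     (\<forall>x y z. m x (y + z) = m x y + m x z) \<and>
     (\<forall>c x y. m (sc c x) y = sc c (m x y)) \<and>
     (\<forall>c x y. m x (sc c y) = sc c (m x y))"

definition associator :: "('a::ab_group_add \<Rightarrow> 'a \<Rightarrow> 'a) \<Rightarrow> 'a \<Rightarrow> 'a \<Rightarrow> 'a \<Rightarrow> 'a" where
  "associator m a b c = m (m a b) c - m a (m b c)"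

definition left_symmetric :: "('a::ab_group_add \<Rightarrow> 'a \<Rightarrow> 'a) \<Rightarrow> bool" where
  "left_symmetric m \<longleftrightarrow> (\<forall>a b c. associator m a b c = associator m b a c)"

definition identity_B1 :: "('a::ab_group_add \<Rightarrow> 'a \<Rightarrow> 'a) \<Rightarrow> bool" where
  "identity_B1 m \<longleftrightarrow> (\<forall>a b c.
     m (m a b) c - m (m b a) c - m (m a c) b + m (m c a) b + m (m b c) a - m (m c b) a = 0)"

definition LS_B1_algebra :: "('k::field \<Rightarrow> 'a::ab_group_add \<Rightarrow> 'a) \<Rightarrow> ('a \<Rightarrow> 'a \<Rightarrow> 'a) \<Rightarrow> bool" where
  "LS_B1_algebra sc m \<longleftrightarrow> is_algebra sc m \<and> left_symmetric m \<and> identity_B1 m"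

definition assosymmetric :: "('a::ab_group_add \<Rightarrow> 'a \<Rightarrow> 'a) \<Rightarrow> bool" where
  "assosymmetric m \<longleftrightarrow> (\<forall>a b c.
     associator m a b c = associator m a c b \<and>
     associator m a b c = associator m b a c \<and>
     associator m a b c = associator m b c a \<and>
     associator m a b c = associator m c a b \<and>
     associator m a b c = associator m c b a)"

definition left_commutative :: "('a \<Rightarrow> 'a \<Rightarrow> 'a) \<Rightarrow> bool" where
  "left_commutative m \<longleftrightarrow> (\<forall>a b c. m a (m b c) = m b (m a c))"

text \<open>An element of S \<otimes> U is represented by a finite list [(s1,u1),...,(sn,un)],
  standing for the sum of the pure tensors si \<otimes> ui.  Such a sum is zero in
  S \<otimes> U iff its image under the canonical (injective) map
  S \<otimes> U \<rightarrow> Hom(S*, U), s \<otimes> u \<mapsto> (\<phi> \<mapsto> \<phi>(s) u), vanishes, i.e. iff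
  for every K-linear functional \<phi> on S the sum of the \<phi>(si) ui is zero.\<close>

definition tensor_is_zero ::
  "('k::field \<Rightarrow> 's::ab_group_add \<Rightarrow> 's) \<Rightarrow> ('k \<Rightarrow> 'u::ab_group_add \<Rightarrow> 'u) \<Rightarrow> ('s \<times> 'u) list \<Rightarrow> bool" where
  "tensor_is_zero scS scU X \<longleftrightarrow>
     (\<forall>\<phi>. Vector_Spaces.linear scS ((*)) \<phi> \<longrightarrow> sum_list (map (\<lambda>(s, u). scU (\<phi> s) u) X) = 0)"

definition tensor_mul ::
  "('s \<Rightarrow> 's \<Rightarrow> 's) \<Rightarrow> ('u \<Rightarrow> 'u \<Rightarrow> 'u) \<Rightarrow> ('s \<times> 'u) list \<Rightarrow> ('s \<times> 'u) list \<Rightarrow> ('s \<times> 'u) list" where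
  "tensor_mul mS mU X Y = concat (map (\<lambda>(s, u). map (\<lambda>(t, v). (mS s t, mU u v)) Y) X)"

definition tensor_neg :: "('s \<times> 'u::ab_group_add) list \<Rightarrow> ('s \<times> 'u) list" where
  "tensor_neg X = map (\<lambda>(s, u). (s, - u)) X"

definition tensor_commutator ::
  "('s \<Rightarrow> 's \<Rightarrow> 's) \<Rightarrow> ('u::ab_group_add \<Rightarrow> 'u \<Rightarrow> 'u) \<Rightarrow> ('s \<times> 'u) list \<Rightarrow> ('s \<times> 'u) list \<Rightarrow> ('s \<times> 'u) list" where
  "tensor_commutator mS mU X Y = tensor_mul mS mU X Y @ tensor_neg (tensor_mul mS mU Y X)"

text \<open>S \<otimes> U is Lie-admissible: the commutator satisfies the Jacobi identity
  (anticommutativity of the commutator holds automatically).\<close>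
definition tensor_Lie_admissible ::
  "('k::field \<Rightarrow> 's::ab_group_add \<Rightarrow> 's) \<Rightarrow> ('s \<Rightarrow> 's \<Rightarrow> 's) \<Rightarrow>
   ('k \<Rightarrow> 'u::ab_group_add \<Rightarrow> 'u) \<Rightarrow> ('u \<Rightarrow> 'u \<Rightarrow> 'u) \<Rightarrow> bool" where
  "tensor_Lie_admissible scS mS scU mU \<longleftrightarrow>
     (\<forall>X Y Z. tensor_is_zero scS scU
        (tensor_commutator mS mU (tensor_commutator mS mU X Y) Z @
         tensor_commutator mS mU (tensor_commutator mS mU Y Z) X @
         tensor_commutator mS mU (tensor_commutator mS mU Z X) Y))"

end

theory Submission
  imports Defs
begin


lemma sum_list_map_concat: "sum_list (map f (concat xss)) = (\<Sum>xs\<leftarrow>xss. sum_list (map f xs))"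
  by (induction xss) auto

lemma sum_list_swap:
  fixes f :: "_ \<Rightarrow> _ \<Rightarrow> 'a::ab_group_add"
  shows "(\<Sum>x\<leftarrow>A. \<Sum>y\<leftarrow>B. f x y) = (\<Sum>y\<leftarrow>B. \<Sum>x\<leftarrow>A. f x y)"
  by (induction A) (simp_all add: sum_list_addf)

lemma L_eq: "m (m x y) z = m x (m y z) + associator m x y z"
  by (simp add: associator_def)

lemma pointwise:
  fixes scU :: "'k::field \<Rightarrow> 'u::ab_group_add \<Rightarrow> 'u" and scS :: "'k \<Rightarrow> 's::ab_group_add \<Rightarrow> 's"
  assumes U: "vector_space scU" and asym: "assosymmetric mU" and lc: "left_commutative mU"
    and ls: "left_symmetric mS" and b1: "identity_B1 mS" and lin: "Vector_Spaces.linear scS (*) \<phi>"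
  shows "scU (\<phi> (mS (mS s t) r)) (mU (mU u v) w) - scU (\<phi> (mS (mS t s) r)) (mU (mU v u) w)
     - scU (\<phi> (mS r (mS s t))) (mU w (mU u v)) + scU (\<phi> (mS r (mS t s))) (mU w (mU v u))
     + scU (\<phi> (mS (mS t r) s)) (mU (mU v w) u) - scU (\<phi> (mS (mS r t) s)) (mU (mU w v) u)
     - scU (\<phi> (mS s (mS t r))) (mU u (mU v w)) + scU (\<phi> (mS s (mS r t))) (mU u (mU w v))
     + scU (\<phi> (mS (mS r s) t)) (mU (mU w u) v) - scU (\<phi> (mS (mS s r) t)) (mU (mU u w) v)
     - scU (\<phi> (mS t (mS r s))) (mU v (mU w u)) + scU (\<phi> (mS t (mS s r))) (mU v (mU u w)) = 0"
proof -
  interpret U: vector_space scU by (fact U)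
  interpret phi: Vector_Spaces.linear scS "(*)" \<phi> by (fact lin)
  define A where "A = associator mU u v w"
  define rw where "rw = mU u (mU v w)"
  define rv where "rv = mU u (mU w v)"
  define ru where "ru = mU v (mU w u)"
  have a1: "associator mU u v w = A" "associator mU v u w = A" "associator mU v w u = A"
     "associator mU w v u = A" "associator mU w u v = A" "associator mU u w v = A"
    using asym unfolding assosymmetric_def A_def by metis+
  have r1: "mU u (mU v w) = rw" "mU v (mU u w) = rw" "mU w (mU u v) = rv" "mU u (mU w v) = rv"
     "mU w (mU v u) = ru" "mU v (mU w u) = ru"
    using lc unfolding left_commutative_def rw_def rv_def ru_def by metis+
  have lsS: "\<And>a b c. \<phi> (mS (mS a b) c) - \<phi> (mS a (mS b c)) = \<phi> (mS (mS b a) c) - \<phi> (mS b (mS a c))"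
    using ls unfolding left_symmetric_def associator_def by (metis phi.diff)
  have b1S: "\<phi> (mS (mS s t) r) - \<phi> (mS (mS t s) r) - \<phi> (mS (mS s r) t) + \<phi> (mS (mS r s) t)
      + \<phi> (mS (mS t r) s) - \<phi> (mS (mS r t) s) = 0"
    using b1 unfolding identity_B1_def by (metis phi.diff phi.add phi.zero)
  have "scU (\<phi> (mS (mS s t) r)) (mU (mU u v) w) - scU (\<phi> (mS (mS t s) r)) (mU (mU v u) w)
     - scU (\<phi> (mS r (mS s t))) (mU w (mU u v)) + scU (\<phi> (mS r (mS t s))) (mU w (mU v u))
     + scU (\<phi> (mS (mS t r) s)) (mU (mU v w) u) - scU (\<phi> (mS (mS r t) s)) (mU (mU w v) u)
     - scU (\<phi> (mS s (mS t r))) (mU u (mU v w)) + scU (\<phi> (mS s (mS r t))) (mU u (mU w v))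
     + scU (\<phi> (mS (mS r s) t)) (mU (mU w u) v) - scU (\<phi> (mS (mS s r) t)) (mU (mU u w) v)
     - scU (\<phi> (mS t (mS r s))) (mU v (mU w u)) + scU (\<phi> (mS t (mS s r))) (mU v (mU u w)) =
     scU (\<phi> (mS (mS s t) r) - \<phi> (mS (mS t s) r) - \<phi> (mS (mS s r) t) + \<phi> (mS (mS r s) t)
      + \<phi> (mS (mS t r) s) - \<phi> (mS (mS r t) s)) A
   + scU ((\<phi> (mS (mS s t) r) - \<phi> (mS s (mS t r))) - (\<phi> (mS (mS t s) r) - \<phi> (mS t (mS s r)))) rw
   + scU ((\<phi> (mS (mS r s) t) - \<phi> (mS r (mS s t))) - (\<phi> (mS (mS s r) t) - \<phi> (mS s (mS r t)))) rv
   + scU ((\<phi> (mS (mS t r) s) - \<phi> (mS t (mS r s))) - (\<phi> (mS (mS r t) s) - \<phi> (mS r (mS t s)))) ru"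
    apply (simp only: L_eq[of mU] a1 r1)
    apply (simp add: U.scale_right_distrib U.scale_left_distrib U.scale_left_diff_distrib algebra_simps)
    done
  also have "\<dots> = 0"
    using b1S lsS[of s t r] lsS[of r s t] lsS[of t r s] by simp
  finally show ?thesis .
qed

lemma perm3:
  fixes f :: "_ \<Rightarrow> _ \<Rightarrow> _ \<Rightarrow> 'a::ab_group_add"
  shows "(\<Sum>y\<leftarrow>Y. \<Sum>x\<leftarrow>X. \<Sum>z\<leftarrow>Z. f x y z) = (\<Sum>x\<leftarrow>X. \<Sum>y\<leftarrow>Y. \<Sum>z\<leftarrow>Z. f x y z)"
    and "(\<Sum>x\<leftarrow>X. \<Sum>z\<leftarrow>Z. \<Sum>y\<leftarrow>Y. f x y z) = (\<Sum>x\<leftarrow>X. \<Sum>y\<leftarrow>Y. \<Sum>z\<leftarrow>Z. f x y z)"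
    and "(\<Sum>z\<leftarrow>Z. \<Sum>x\<leftarrow>X. \<Sum>y\<leftarrow>Y. f x y z) = (\<Sum>x\<leftarrow>X. \<Sum>y\<leftarrow>Y. \<Sum>z\<leftarrow>Z. f x y z)"
    and "(\<Sum>y\<leftarrow>Y. \<Sum>z\<leftarrow>Z. \<Sum>x\<leftarrow>X. f x y z) = (\<Sum>x\<leftarrow>X. \<Sum>y\<leftarrow>Y. \<Sum>z\<leftarrow>Z. f x y z)"
    and "(\<Sum>z\<leftarrow>Z. \<Sum>y\<leftarrow>Y. \<Sum>x\<leftarrow>X. f x y z) = (\<Sum>x\<leftarrow>X. \<Sum>y\<leftarrow>Y. \<Sum>z\<leftarrow>Z. f x y z)"
  by (simp_all only: sum_list_swap[where A=Y and B=X] sum_list_swap[where A=Z and B=X] sum_list_swap[where A=Z and B=Y])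

lemma dir1:
  fixes scU :: "'k::field \<Rightarrow> 'u::ab_group_add \<Rightarrow> 'u" and scS :: "'k \<Rightarrow> 's::ab_group_add \<Rightarrow> 's"
  assumes alg: "is_algebra scU mU" and asym: "assosymmetric mU" and lc: "left_commutative mU"
    and S: "LS_B1_algebra scS mS"
  shows "tensor_Lie_admissible scS mS scU mU"
  unfolding tensor_Lie_admissible_def tensor_is_zero_def
proof (intro allI impI)
  fix X Y Z :: "('s \<times> 'u) list" and \<phi>
  assume lin: "Vector_Spaces.linear scS (*) \<phi>"
  have U: "vector_space scU" using alg by (simp add: is_algebra_def)
  interpret U: vector_space scU by (fact U)
  have ls: "left_symmetric mS" and b1: "identity_B1 mS" using S by (simp_all add: LS_B1_algebra_def)
  have addL: "\<And>x y z. mU (x + y) z = mU x z + mU y z" and addR: "\<And>x y z. mU x (y + z) = mU x y + mU x z"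
    using alg by (simp_all add: is_algebra_def)
  have zL: "\<And>y. mU 0 y = 0"
  proof -
    fix y have "mU 0 y = mU 0 y + mU 0 y" using addL[of 0 0 y] by simp
    then show "mU 0 y = 0" by simp
  qed
  have zR: "\<And>y. mU y 0 = 0"
  proof -
    fix y have "mU y 0 = mU y 0 + mU y 0" using addR[of y 0 0] by simp
    then show "mU y 0 = 0" by simp
  qed
  have negL: "\<And>x y. mU (- x) y = - mU x y"
  proof -
    fix x y have "mU x y + mU (- x) y = 0" using addL[of x "- x" y] zL by simp
    then show "mU (- x) y = - mU x y" by (metis add.commute eq_neg_iff_add_eq_0)
  qed
  have negR: "\<And>x y. mU x (- y) = - mU x y"
  proof -
    fix x y have "mU x y + mU x (- y) = 0" using addR[of x y "- y"] zR by simp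
    then show "mU x (- y) = - mU x y" by (metis add.commute eq_neg_iff_add_eq_0)
  qed
  define F where "F = (\<lambda>L. sum_list (map (\<lambda>(s, u). scU (\<phi> s) u) (L :: ('s \<times> 'u) list)))"
  define LL where "LL = (\<lambda>x y z. scU (\<phi> (mS (mS (fst x) (fst y)) (fst z))) (mU (mU (snd x) (snd y)) (snd z)))"
  define RR where "RR = (\<lambda>x y z. scU (\<phi> (mS (fst x) (mS (fst y) (fst z)))) (mU (snd x) (mU (snd y) (snd z))))"
  let ?tm = "tensor_mul mS mU"
  have F_app: "\<And>A B. F (A @ B) = F A + F B" by (simp add: F_def)
  have F_neg: "\<And>A. F (tensor_neg A) = - F A"
  proof -
    fix A show "F (tensor_neg A) = - F A"
      by (induction A) (auto simp: F_def tensor_neg_def U.scale_minus_right)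
  qed
  have tm_app: "\<And>A B C. ?tm (A @ B) C = ?tm A C @ ?tm B C" by (simp add: tensor_mul_def)
  have tm_negL: "\<And>A C. ?tm (tensor_neg A) C = tensor_neg (?tm A C)"
    by (simp add: tensor_mul_def tensor_neg_def map_concat o_def split_def negL)
  have tm_negR: "\<And>A C. ?tm C (tensor_neg A) = tensor_neg (?tm C A)"
    by (simp add: tensor_mul_def tensor_neg_def map_concat o_def split_def negR)
  have F_tm: "\<And>A B. F (?tm A B) = (\<Sum>x\<leftarrow>A. \<Sum>y\<leftarrow>B. scU (\<phi> (mS (fst x) (fst y))) (mU (snd x) (snd y)))"
    by (simp add: F_def tensor_mul_def sum_list_map_concat o_def split_def)
  have F_LL: "\<And>P Q R. F (?tm (?tm P Q) R) = (\<Sum>x\<leftarrow>P. \<Sum>y\<leftarrow>Q. \<Sum>z\<leftarrow>R. LL x y z)"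
    unfolding F_tm by (simp add: LL_def tensor_mul_def sum_list_map_concat o_def split_def)
  have F_RR: "\<And>P Q R. F (?tm R (?tm P Q)) = (\<Sum>z\<leftarrow>R. \<Sum>x\<leftarrow>P. \<Sum>y\<leftarrow>Q. RR z x y)"
    unfolding F_tm by (simp add: RR_def tensor_mul_def sum_list_map_concat o_def split_def)
  have F_tmR_app: "\<And>A B C. F (?tm C (A @ B)) = F (?tm C A) + F (?tm C B)"
    by (simp add: F_tm sum_list_addf)
  have F_tc: "\<And>P Q R. F (tensor_commutator mS mU (tensor_commutator mS mU P Q) R)
     = F (?tm (?tm P Q) R) - F (?tm (?tm Q P) R) - F (?tm R (?tm P Q)) + F (?tm R (?tm Q P))"
    by (simp add: tensor_commutator_def tm_app F_app tm_negL tm_negR F_neg F_tmR_app)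
  have pw: "\<And>x y z. LL x y z - LL y x z - RR z x y + RR z y x + LL y z x - LL z y x - RR x y z + RR x z y
     + LL z x y - LL x z y - RR y z x + RR y x z = 0"
    unfolding LL_def RR_def by (rule pointwise[OF U asym lc ls b1 lin])
  have "F (tensor_commutator mS mU (tensor_commutator mS mU X Y) Z @
         tensor_commutator mS mU (tensor_commutator mS mU Y Z) X @
         tensor_commutator mS mU (tensor_commutator mS mU Z X) Y) =
     (\<Sum>x\<leftarrow>X. \<Sum>y\<leftarrow>Y. \<Sum>z\<leftarrow>Z. LL x y z - LL y x z - RR z x y + RR z y x + LL y z x - LL z y x - RR x y z + RR x z y
     + LL z x y - LL x z y - RR y z x + RR y x z)"
    apply (simp only: F_app F_tc F_LL F_RR perm3[where X=X and Y=Y and Z=Z] sum_list_addf sum_list_subtractf)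
    apply (simp add: algebra_simps)
    done
  also have "\<dots> = 0" by (simp add: pw)
  finally show "(\<Sum>(s, u)\<leftarrow>tensor_commutator mS mU (tensor_commutator mS mU X Y) Z @
         tensor_commutator mS mU (tensor_commutator mS mU Y Z) X @
         tensor_commutator mS mU (tensor_commutator mS mU Z X) Y. scU (\<phi> s) u) = 0"
    by (simp add: F_def)
qed



definition scF :: "'k::field \<Rightarrow> (nat \<Rightarrow> 'k) \<Rightarrow> (nat \<Rightarrow> 'k)" where
  "scF c f = (\<lambda>i. c * f i)"

definition dl :: "nat \<Rightarrow> nat \<Rightarrow> 'k::field" where
  "dl j = (\<lambda>i. if i = j then 1 else 0)"

lemma vs_scF: "vector_space (scF :: 'k::field \<Rightarrow> _)"
  unfolding vector_space_def scF_def by (simp add: fun_eq_iff algebra_simps)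

lemma vs_mult: "vector_space ((*) :: 'k::field \<Rightarrow> _)"
  unfolding vector_space_def by (simp add: algebra_simps)

lemma lin1: "Vector_Spaces.linear (scF :: 'k::field \<Rightarrow> _) (*) (\<lambda>x. x 1)"
  unfolding Vector_Spaces.linear_iff using vs_scF vs_mult by (simp add: scF_def)

definition m1 :: "(nat \<Rightarrow> 'k::field) \<Rightarrow> _ \<Rightarrow> _" where "m1 x y = (\<lambda>i. x 0 * y i)"
definition m2 :: "(nat \<Rightarrow> 'k::field) \<Rightarrow> _ \<Rightarrow> _" where "m2 x y = (\<lambda>i. x i * y 0)"
definition m3 :: "(nat \<Rightarrow> 'k::field) \<Rightarrow> _ \<Rightarrow> _" where "m3 x y = (\<lambda>i. if i = 1 then x 0 * y 1 else 0)"

lemma alg1: "LS_B1_algebra scF (m1 :: (nat \<Rightarrow> 'k::field) \<Rightarrow> _)"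
  unfolding LS_B1_algebra_def is_algebra_def left_symmetric_def identity_B1_def associator_def
  using vs_scF by (simp add: m1_def scF_def fun_eq_iff algebra_simps)
lemma alg2: "LS_B1_algebra scF (m2 :: (nat \<Rightarrow> 'k::field) \<Rightarrow> _)"
  unfolding LS_B1_algebra_def is_algebra_def left_symmetric_def identity_B1_def associator_def
  using vs_scF by (simp add: m2_def scF_def fun_eq_iff algebra_simps)
lemma alg3: "LS_B1_algebra scF (m3 :: (nat \<Rightarrow> 'k::field) \<Rightarrow> _)"
  unfolding LS_B1_algebra_def is_algebra_def left_symmetric_def identity_B1_def associator_def
  using vs_scF by (simp add: m3_def scF_def fun_eq_iff algebra_simps)

lemma inst:
  assumes "tensor_Lie_admissible scF mS scU mU"
  shows "sum_list (map (\<lambda>(s, u). scU (s 1) u)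
        (tensor_commutator mS mU (tensor_commutator mS mU [(a,u)] [(b,v)]) [(c,w)] @
         tensor_commutator mS mU (tensor_commutator mS mU [(b,v)] [(c,w)]) [(a,u)] @
         tensor_commutator mS mU (tensor_commutator mS mU [(c,w)] [(a,u)]) [(b,v)])) = 0"
  using assms lin1 unfolding tensor_Lie_admissible_def tensor_is_zero_def by blast

lemma alg_neg:
  assumes alg: "is_algebra sc mU"
  shows "mU (- x) y = - mU x y" "mU x (- y) = - mU x y"
proof -
  have addL: "\<And>x y z. mU (x + y) z = mU x z + mU y z" and addR: "\<And>x y z. mU x (y + z) = mU x y + mU x z"
    using alg by (simp_all add: is_algebra_def)
  have zL: "mU 0 y = 0"
  proof -
    have "mU 0 y = mU 0 y + mU 0 y" using addL[of 0 0 y] by simp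
    then show "mU 0 y = 0" by simp
  qed
  have zR: "mU x 0 = 0"
  proof -
    have "mU x 0 = mU x 0 + mU x 0" using addR[of x 0 0] by simp
    then show "mU x 0 = 0" by simp
  qed
  have "mU x y + mU (- x) y = 0" using addL[of x "- x" y] zL by simp
  then show "mU (- x) y = - mU x y" by (metis add.commute eq_neg_iff_add_eq_0)
  have "mU x y + mU x (- y) = 0" using addR[of x y "- y"] zR by simp
  then show "mU x (- y) = - mU x y" by (metis add.commute eq_neg_iff_add_eq_0)
qed

lemma dir2:
  fixes scU :: "'k::field \<Rightarrow> 'u::ab_group_add \<Rightarrow> 'u"
  assumes alg: "is_algebra scU mU"
    and H: "\<forall>(scS :: 'k \<Rightarrow> (nat \<Rightarrow> 'k) \<Rightarrow> (nat \<Rightarrow> 'k)) mS. LS_B1_algebra scS mS \<longrightarrow> tensor_Lie_admissible scS mS scU mU"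
  shows "assosymmetric mU \<and> left_commutative mU"
proof -
  have U: "vector_space scU" using alg by (simp add: is_algebra_def)
  interpret U: vector_space scU by (fact U)
  note ng = alg_neg[OF alg]
  have P: "associator mU u v w = associator mU v u w" for u v w
  proof -
    have "tensor_Lie_admissible scF m1 scU mU" using H alg1 by blast
    from inst[OF this, of "dl 0" u "dl 0" v "dl 1" w]
    show ?thesis
      apply (simp add: tensor_commutator_def tensor_mul_def tensor_neg_def m1_def dl_def ng)
      apply (subst eq_iff_diff_eq_0)
      apply (simp add: associator_def algebra_simps)
      done
  qed
  have Q: "associator mU u v w = associator mU u w v" for u v w
  proof -
    have "tensor_Lie_admissible scF m2 scU mU" using H alg2 by blast
    from inst[OF this, of "dl 1" u "dl 0" v "dl 0" w]
    show ?thesis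
      apply (simp add: tensor_commutator_def tensor_mul_def tensor_neg_def m2_def dl_def ng)
      apply (subst eq_iff_diff_eq_0)
      apply (simp add: associator_def algebra_simps)
      done
  qed
  have R: "mU u (mU v w) = mU v (mU u w)" for u v w
  proof -
    have "tensor_Lie_admissible scF m3 scU mU" using H alg3 by blast
    from inst[OF this, of "dl 0" u "dl 0" v "dl 1" w]
    show ?thesis
      apply (simp add: tensor_commutator_def tensor_mul_def tensor_neg_def m3_def dl_def ng)
      done
  qed
  show ?thesis
    unfolding assosymmetric_def left_commutative_def using P Q R by metis
qed

theorem mainTheorem4:
  fixes scU :: "'k::field_char_0 \<Rightarrow> 'u::ab_group_add \<Rightarrow> 'u"
    and mU :: "'u \<Rightarrow> 'u \<Rightarrow> 'u"
  assumes "is_algebra scU mU"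
  shows "(assosymmetric mU \<and> left_commutative mU \<longrightarrow>
            (\<forall>(scS :: 'k \<Rightarrow> 's::ab_group_add \<Rightarrow> 's) mS.
               LS_B1_algebra scS mS \<longrightarrow> tensor_Lie_admissible scS mS scU mU))
       \<and> ((\<forall>(scS :: 'k \<Rightarrow> (nat \<Rightarrow> 'k) \<Rightarrow> (nat \<Rightarrow> 'k)) mS.
               LS_B1_algebra scS mS \<longrightarrow> tensor_Lie_admissible scS mS scU mU) \<longrightarrow>
            assosymmetric mU \<and> left_commutative mU)"
  using dir1[OF assms] dir2[OF assms] by blast

end
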